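(* Let $d\ge 1$, $\sigma>0$, and let $A_0,A_1\in\mathbb{R}^{d\times d}$ be constant matrices (not assumed to commute). Then the function $Z$ defined in the context (restricted to $[-\sigma,\infty)$) is the unique solution of the initial value problem \[ \dot Z(\vartheta)=A_0Z(\vartheta-\sigma)+Z(\vartheta-\sigma)A_1,\ \ \vartheta\in[0,\infty),\qquad Z(\vartheta)=I,\ \ \vartheta\in[-\sigma,0]. \]
   Context: $\Theta$ and $I$ denote the $d\times d$ zero and identity matrices. Define matrices $Q_{r+1}(r\sigma)$, $r=0,1,2,\dots$, recursively by $Q_1(0)=I$ and $Q_{r+1}(r\sigma)=A_0Q_r((r-1)\sigma)+Q_r((r-1)\sigma)A_1$ for $r\ge 1$. Define $Z:\mathbb{R}\to\mathbb{R}^{d\times d}$ by $Z(\vartheta)=\Theta$ for $\vartheta<-\sigma$, and, for each integer $u\ge 0$ and $\vartheta\in[(u-1)\sigma,u\sigma)$, \[ Z(\vartheta)=\sum_{r=0}^{u}Q_{r+1}(r\sigma)\frac{(\vartheta-(r-1)\sigma)^r}{r!}. \] *)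

theory Defs
  imports "HOL-Analysis.Analysis"
begin

text \<open>QQ A0 A1 r represents the matrix Q_{r+1}(r sigma) of the paper
  (the argument r sigma is only a label).\<close>
fun QQ :: "real^'n^'n \<Rightarrow> real^'n^'n \<Rightarrow> nat \<Rightarrow> real^'n^'n" where
  "QQ A0 A1 0 = mat 1"
| "QQ A0 A1 (Suc r) = A0 ** QQ A0 A1 r + QQ A0 A1 r ** A1"

definition ZZ :: "real^'n^'n \<Rightarrow> real^'n^'n \<Rightarrow> real \<Rightarrow> real \<Rightarrow> real^'n^'n" where
  "ZZ A0 A1 \<sigma> t =
     (if t < - \<sigma> then 0
      else (\<Sum>r = 0..nat (\<lfloor>t / \<sigma>\<rfloor> + 1).
              ((t - (real r - 1) * \<sigma>) ^ r / fact r) *\<^sub>R QQ A0 A1 r))"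

end

theory Submission imports Defs begin
lemma mm_scale_r: "(A::real^'n^'n) ** (c *\<^sub>R B) = c *\<^sub>R (A ** B)"
  by (simp add: vec_eq_iff matrix_matrix_mult_def sum_distrib_left mult.left_commute)
lemma mm_scale_l: "(c *\<^sub>R (A::real^'n^'n)) ** B = c *\<^sub>R (A ** B)"
  by (simp add: vec_eq_iff matrix_matrix_mult_def sum_distrib_left mult.assoc)
lemma mm_rdistrib: "((A::real^'n^'n) + B) ** C = A ** C + B ** C"
  by (simp add: vec_eq_iff matrix_matrix_mult_def sum.distrib distrib_right)
lemma mm_sum_r: "finite S \<Longrightarrow> (A::real^'n^'n) ** (\<Sum>i\<in>S. (f i :: real^'n^'n)) = (\<Sum>i\<in>S. A ** f i)"
  by (induction S rule: finite_induct) (auto simp: matrix_add_ldistrib)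
lemma mm_sum_l: "finite S \<Longrightarrow> (\<Sum>i\<in>S. (f i :: real^'n^'n)) ** (A::real^'n^'n) = (\<Sum>i\<in>S. f i ** A)"
  by (induction S rule: finite_induct) (auto simp: mm_rdistrib)

definition HH :: "real \<Rightarrow> nat \<Rightarrow> real \<Rightarrow> real" where
  "HH \<sigma> r t = (if (real r - 1) * \<sigma> \<le> t then (t - (real r - 1) * \<sigma>) ^ r / fact r else 0)"

definition FF :: "real^'n^'n \<Rightarrow> real^'n^'n \<Rightarrow> real \<Rightarrow> nat \<Rightarrow> real \<Rightarrow> real^'n^'n" where
  "FF A0 A1 \<sigma> N t = (\<Sum>r=0..N. HH \<sigma> r t *\<^sub>R QQ A0 A1 r)"

lemma ZF:
  assumes "\<sigma> > 0" "- \<sigma> \<le> t" "nat (\<lfloor>t / \<sigma>\<rfloor> + 1) \<le> N"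
  shows "ZZ A0 A1 \<sigma> t = FF A0 A1 \<sigma> N t"
proof -
  define M where "M = nat (\<lfloor>t / \<sigma>\<rfloor> + 1)"
  have fl: "\<lfloor>t / \<sigma>\<rfloor> \<ge> -1"
  proof -
    have "-1 \<le> t / \<sigma>" using assms by (simp add: le_divide_eq)
    thus ?thesis by (simp add: le_floor_iff)
  qed
  have le: "(real r - 1) * \<sigma> \<le> t" if "r \<le> M" for r
  proof -
    have "int r \<le> \<lfloor>t / \<sigma>\<rfloor> + 1" using that fl unfolding M_def by linarith
    hence "real r - 1 \<le> t / \<sigma>" by linarith
    thus ?thesis using assms(1) by (simp add: pos_le_divide_eq)
  qed
  have gt: "(real r - 1) * \<sigma> > t" if "r > M" for r
  proof -
    have "int r \<ge> \<lfloor>t / \<sigma>\<rfloor> + 2" using that fl unfolding M_def by linarith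
    hence "real r - 1 > t / \<sigma>" by linarith
    thus ?thesis using assms(1) by (simp add: pos_divide_less_eq)
  qed
  have HH0: "HH \<sigma> i t = 0" if "i > M" for i
    unfolding HH_def using gt[OF that] by simp
  have "ZZ A0 A1 \<sigma> t = (\<Sum>r=0..M. ((t - (real r - 1) * \<sigma>) ^ r / fact r) *\<^sub>R QQ A0 A1 r)"
    using assms unfolding ZZ_def M_def by simp
  also have "\<dots> = FF A0 A1 \<sigma> N t"
    unfolding FF_def
    apply (rule sum.mono_neutral_cong_left)
       apply simp
    using assms(3) apply (auto simp: M_def)[1]
    using HH0 apply force
    using le by (auto simp: HH_def M_def)
  finally show ?thesis .
qed

lemma hder:
  assumes "\<sigma> > 0" "t \<ge> 0"
  shows "(HH \<sigma> (Suc n) has_real_derivative HH \<sigma> n (t - \<sigma>)) (at t within {0..})"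
proof (cases n)
  case 0
  have "((\<lambda>s. s) has_real_derivative 1) (at t within {0..})" by (rule derivative_eq_intros) auto
  hence "((\<lambda>s. s) has_real_derivative HH \<sigma> n (t - \<sigma>)) (at t within {0..})"
    using 0 assms by (simp add: HH_def)
  then show ?thesis
    apply (rule has_field_derivative_transform_within[where d=1])
    using assms 0 by (auto simp: HH_def)
next
  case (Suc m)
  define c where "c = real n * \<sigma>"
  have fd: "((\<lambda>s. (s - c) ^ Suc n / fact (Suc n)) has_vector_derivative (x - c) ^ n / fact n) (at x within S)" for x S
  proof -
    have "((\<lambda>s. (s - c) ^ Suc n) has_real_derivative
       (real (Suc n) * (x - c) ^ n * 1)) (at x within S)"
      by (rule derivative_eq_intros refl)+ simp
    hence "((\<lambda>s. (s - c) ^ Suc n / fact (Suc n)) has_real_derivative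
       (real (Suc n) * (x - c) ^ n * 1 / fact (Suc n))) (at x within S)"
      by (rule DERIV_cdivide)
    moreover have "real (Suc n) * (x - c) ^ n * 1 / fact (Suc n) = (x - c) ^ n / fact n"
      by (simp add: fact_Suc field_simps del: of_nat_Suc)
    ultimately show ?thesis by (simp add: has_real_derivative_iff_has_vector_derivative)
  qed
  have "((\<lambda>x. if x \<in> {c..} then (x - c) ^ Suc n / fact (Suc n) else 0) has_vector_derivative
      (if t \<in> {c..} then (t - c) ^ n / fact n else 0)) (at t within UNIV)"
    apply (rule has_vector_derivative_If_within_closures[where T="{..c}"])
         apply auto[1]
        apply auto[1]
       apply (rule fd)
      apply (rule derivative_eq_intros)
    using Suc by auto
  moreover have "(\<lambda>x. if x \<in> {c..} then (x - c) ^ Suc n / fact (Suc n) else 0) = HH \<sigma> (Suc n)"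
    by (auto simp: HH_def c_def fun_eq_iff)
  moreover have "(if t \<in> {c..} then (t - c) ^ n / fact n else 0) = HH \<sigma> n (t - \<sigma>)"
    by (auto simp: HH_def c_def algebra_simps)
  ultimately show ?thesis
    by (auto simp: has_real_derivative_iff_has_vector_derivative intro: has_vector_derivative_within_subset)
qed

lemma Fder:
  fixes A0 A1 :: "real^'n^'n"
  assumes "\<sigma> > 0" "t \<ge> 0"
  shows "(FF A0 A1 \<sigma> N has_vector_derivative (\<Sum>r<N. HH \<sigma> r (t - \<sigma>) *\<^sub>R QQ A0 A1 (Suc r)))
           (at t within {0..})"
proof (induction N)
  case 0
  have "((\<lambda>s. mat 1 :: real^'n^'n) has_vector_derivative 0) (at t within {0..})"
    by (rule has_vector_derivative_const)
  then show ?case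
    unfolding lessThan_0 sum.empty
    apply (rule has_vector_derivative_transform_within[where d=1])
    using assms by (auto simp: FF_def HH_def)
next
  case (Suc N)
  have e: "FF A0 A1 \<sigma> (Suc N) = (\<lambda>s. FF A0 A1 \<sigma> N s + HH \<sigma> (Suc N) s *\<^sub>R QQ A0 A1 (Suc N))"
    by (auto simp: FF_def fun_eq_iff)
  have "((\<lambda>s. FF A0 A1 \<sigma> N s + HH \<sigma> (Suc N) s *\<^sub>R QQ A0 A1 (Suc N)) has_vector_derivative
     ((\<Sum>r<N. HH \<sigma> r (t - \<sigma>) *\<^sub>R QQ A0 A1 (Suc r)) + 
      (HH \<sigma> (Suc N) t *\<^sub>R 0 + HH \<sigma> N (t - \<sigma>) *\<^sub>R QQ A0 A1 (Suc N)))) (at t within {0..})"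
    apply (rule has_vector_derivative_add[OF Suc.IH])
    apply (rule has_vector_derivative_scaleR[OF hder[OF assms]])
    by (rule has_vector_derivative_const)
  then show ?case by (simp add: e)
qed

lemma Dsum:
  "(\<Sum>r<Suc M. HH \<sigma> r s *\<^sub>R QQ A0 A1 (Suc r)) = A0 ** FF A0 A1 \<sigma> M s + FF A0 A1 \<sigma> M s ** A1"
  unfolding FF_def
  by (simp add: mm_sum_r mm_sum_l mm_scale_r mm_scale_l scaleR_add_right sum.distrib
       lessThan_Suc_atMost atLeast0AtMost)

theorem theorem2:
  fixes A0 A1 :: "real^'n^'n" and \<sigma> :: real
  assumes "\<sigma> > 0"
  shows "(\<forall>t\<in>{-\<sigma>..0}. ZZ A0 A1 \<sigma> t = mat 1)
    \<and> (\<forall>t\<ge>0. (ZZ A0 A1 \<sigma> has_vector_derivative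
            (A0 ** ZZ A0 A1 \<sigma> (t - \<sigma>) + ZZ A0 A1 \<sigma> (t - \<sigma>) ** A1)) (at t within {0..}))
    \<and> (\<forall>Y :: real \<Rightarrow> real^'n^'n.
          (\<forall>t\<in>{-\<sigma>..0}. Y t = mat 1)
          \<and> (\<forall>t\<ge>0. (Y has_vector_derivative
                (A0 ** Y (t - \<sigma>) + Y (t - \<sigma>) ** A1)) (at t within {0..}))
          \<longrightarrow> (\<forall>t\<ge>-\<sigma>. Y t = ZZ A0 A1 \<sigma> t))"
proof -
  have init: "ZZ A0 A1 \<sigma> t = mat 1" if t: "t \<in> {-\<sigma>..0}" for t
  proof -
    have "t / \<sigma> \<le> 0" using t assms by (simp add: divide_nonpos_pos)
    hence fl: "\<lfloor>t / \<sigma>\<rfloor> \<le> 0" by linarith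
    have "ZZ A0 A1 \<sigma> t = FF A0 A1 \<sigma> 1 t"
      apply (rule ZF) using t assms apply auto[2] using fl by arith
    also have "\<dots> = mat 1"
      using t by (simp add: FF_def HH_def)
    finally show ?thesis .
  qed
  have der: "(ZZ A0 A1 \<sigma> has_vector_derivative
            (A0 ** ZZ A0 A1 \<sigma> (t - \<sigma>) + ZZ A0 A1 \<sigma> (t - \<sigma>) ** A1)) (at t within {0..})"
    if t: "t \<ge> 0" for t
  proof -
    define M where "M = nat (\<lfloor>t / \<sigma>\<rfloor> + 1)"
    have fl: "\<lfloor>(t - \<sigma>) / \<sigma>\<rfloor> = \<lfloor>t / \<sigma>\<rfloor> - 1"
    proof -
      have "(t - \<sigma>) / \<sigma> = t / \<sigma> - 1" using assms by (simp add: field_simps)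
      thus ?thesis by simp
    qed
    have "ZZ A0 A1 \<sigma> (t - \<sigma>) = FF A0 A1 \<sigma> M (t - \<sigma>)"
      apply (rule ZF) using t assms by (auto simp: fl M_def)
    hence e: "A0 ** ZZ A0 A1 \<sigma> (t - \<sigma>) + ZZ A0 A1 \<sigma> (t - \<sigma>) ** A1
       = (\<Sum>r<Suc M. HH \<sigma> r (t - \<sigma>) *\<^sub>R QQ A0 A1 (Suc r))"
      by (simp only: Dsum)
    have "(FF A0 A1 \<sigma> (Suc M) has_vector_derivative
       (\<Sum>r<Suc M. HH \<sigma> r (t - \<sigma>) *\<^sub>R QQ A0 A1 (Suc r))) (at t within {0..})"
      by (rule Fder[OF assms t])
    then have "(ZZ A0 A1 \<sigma> has_vector_derivative
       (\<Sum>r<Suc M. HH \<sigma> r (t - \<sigma>) *\<^sub>R QQ A0 A1 (Suc r))) (at t within {0..})"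
    proof (rule has_vector_derivative_transform_within[where d=\<sigma>])
      show "0 < \<sigma>" "t \<in> {0..}" using assms t by auto
      fix s assume s: "s \<in> {0..}" "dist s t < \<sigma>"
      have "s / \<sigma> < t / \<sigma> + 1"
        using s assms by (simp add: dist_real_def field_simps abs_less_iff)
      hence f1: "\<lfloor>s / \<sigma>\<rfloor> \<le> \<lfloor>t / \<sigma>\<rfloor> + 1" by linarith
      have f2: "\<lfloor>t / \<sigma>\<rfloor> \<ge> 0" using t assms by simp
      have f3: "nat (\<lfloor>s / \<sigma>\<rfloor> + 1) \<le> Suc M" unfolding M_def using f1 f2 by arith
      show "FF A0 A1 \<sigma> (Suc M) s = ZZ A0 A1 \<sigma> s"
        apply (intro ZF[symmetric]) using s assms f3 by auto
    qed
    then show ?thesis by (simp add: e)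
  qed
  have uniq: "Y t = ZZ A0 A1 \<sigma> t"
    if Y1: "\<forall>t\<in>{-\<sigma>..0}. Y t = mat 1"
      and Y2: "\<forall>t\<ge>0. (Y has_vector_derivative
                (A0 ** Y (t - \<sigma>) + Y (t - \<sigma>) ** A1)) (at t within {0..})"
      and t: "t \<ge> -\<sigma>" for Y t
  proof -
    have ind: "\<forall>t\<in>{-\<sigma>..real k * \<sigma>}. Y t = ZZ A0 A1 \<sigma> t" for k :: nat
    proof (induction k)
      case 0
      then show ?case using Y1 init by simp
    next
      case (Suc k)
      let ?S = "{real k * \<sigma> .. real (Suc k) * \<sigma>}"
      have "\<forall>s\<in>?S. (\<lambda>s. Y s - ZZ A0 A1 \<sigma> s) s = (\<lambda>s. Y s - ZZ A0 A1 \<sigma> s) (real k * \<sigma>)"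
      proof (rule has_vector_derivative_zero_constant[of ?S "\<lambda>s. Y s - ZZ A0 A1 \<sigma> s"])
        show "convex ?S" by simp
        fix s assume s: "s \<in> ?S"
        have s0: "s \<ge> 0" using s assms by (auto intro: order_trans[rotated])
        have sub: "?S \<subseteq> {0..}" using assms by (auto intro: order_trans[rotated])
        have eq: "Y (s - \<sigma>) = ZZ A0 A1 \<sigma> (s - \<sigma>)"
          using Suc.IH s s0 assms by (auto simp: algebra_simps)
        have "((\<lambda>s. Y s - ZZ A0 A1 \<sigma> s) has_vector_derivative
          (A0 ** Y (s - \<sigma>) + Y (s - \<sigma>) ** A1) - (A0 ** ZZ A0 A1 \<sigma> (s - \<sigma>) + ZZ A0 A1 \<sigma> (s - \<sigma>) ** A1))
           (at s within {0..})"
          using Y2 der s0 by (intro has_vector_derivative_diff) auto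
        then show "((\<lambda>s. Y s - ZZ A0 A1 \<sigma> s) has_vector_derivative 0) (at s within ?S)"
          using eq sub by (auto intro: has_vector_derivative_within_subset)
      qed (auto)
      moreover have "Y (real k * \<sigma>) - ZZ A0 A1 \<sigma> (real k * \<sigma>) = 0"
      proof -
        have "real k * \<sigma> \<in> {-\<sigma>..real k * \<sigma>}" using assms
          by (simp add: order_trans[of "-\<sigma>" 0])
        thus ?thesis using Suc.IH by auto
      qed
      ultimately have "\<forall>s\<in>?S. Y s = ZZ A0 A1 \<sigma> s" by auto
      moreover have "{-\<sigma>..real (Suc k) * \<sigma>} \<subseteq> {-\<sigma>..real k * \<sigma>} \<union> ?S" by auto
      ultimately show ?case using Suc.IH by blast
    qed
    define k where "k = nat \<lceil>t / \<sigma>\<rceil>"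
    have "t / \<sigma> \<le> real k" unfolding k_def by (rule real_nat_ceiling_ge)
    hence "t \<le> real k * \<sigma>" using assms by (simp add: pos_divide_le_eq)
    thus ?thesis using ind[of k] t by auto
  qed
  show ?thesis using init der uniq by blast
qed

end
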